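(* Fix a dataset $\mathbb D_N$ and a point $x\in\mathcal X$. Let $\lambda_\dagger(x|\mathbb D_N)$ be the minimum eigenvalue of the feasibility tradeoff matrix $\mathcal F(x|\mathbb D_N)=\beta^2\Sigma_{L_gB}(x|\mathbb D_N)-\widehat{L_gB}(x|\mathbb D_N)^T\widehat{L_gB}(x|\mathbb D_N)$, and let $e_\dagger(x|\mathbb D_N)$ be an associated unit eigenvector. Suppose $\lambda_\dagger(x|\mathbb D_N)<0$. Then: - the GP-CBF-SOCP is feasible at $x$; and - there exists $\alpha_{\min}>0$ such that for every $\alpha>\alpha_{\min}$, the input $$u_{\text{safe}}(x)=\alpha\,\mathrm{sgn}\big(\widehat{L_gB}(x|\mathbb D_N)e_\dagger(x|\mathbb D_N)\big)\,e_\dagger(x|\mathbb D_N)$$ is a feasible solution of the GP-CBF-SOCP at $x$.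
   Context: Consider $\dot x=f(x)+g(x)u$ with $x\in\mathcal X\subset\mathbb R^n$ and $u\in\mathbb R^m$, where $f,g$ are locally Lipschitz and unknown. A nominal model $\tilde f,\tilde g$ is available. Let $B:\mathcal X\to\mathbb R$ be $C^1$, let $\gamma$ be extended class-$\mathcal K_\infty$, and let $u_{\text{ref}}$ be a reference controller. Lie derivatives: $L_{\tilde f}B=\nabla B\,\tilde f$ and $L_{\tilde g}B=\nabla B\,\tilde g\in\mathbb R^{1\times m}$; $L_fB$ and $L_gB$ are defined similarly. Set $\Delta_B(x,u)=(L_fB-L_{\tilde f}B)(x)+(L_gB-L_{\tilde g}B)(x)u$. A dataset $\mathbb D_N=\{((x_j,u_j),z_j)\}$ consists of $z_j=\Delta_B(x_j,u_j)+\epsilon_j$. GP model with the affine dot product kernel $k_c((x,y),(x',y'))=y^T\mathrm{diag}(k_1(x,x'),\dots,k_{m+1}(x,x'))y'$: - Let $y_j=[1,u_j^T]^T$, $\mathbf z=(z_j)$, let $\sigma_n>0$, and let $K_c$ be the Gram matrix of $k_c$ on the data. - Let $K_{**}(x)=\mathrm{diag}(k_i(x,x))$, and let $K_{*Y}(x)\in\mathbb R^{(m+1)\times N}$ have entries $k_i(x,x_j)(y_j)_i$. - Define $m_B(x|\mathbb D_N)=K_{*Y}(K_c+\sigma_n^2I)^{-1}\mathbf z$ and $\Sigma_B(x|\mathbb D_N)=K_{**}-K_{*Y}(K_c+\sigma_n^2I)^{-1}K_{*Y}^T$, which is positive definite. - The posterior mean and standard deviation are $\mu_B(x,u|\mathbb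 D_N)=m_B^T[1;u]$ and $\sigma_B(x,u|\mathbb D_N)=\sqrt{[1,u^T]\Sigma_B[1;u]}$. $\beta>0$ is a constant. Derived quantities: - $\widehat{L_fB}(x|\mathbb D_N)=L_{\tilde f}B(x)+(m_B)_1$ and $\widehat{L_gB}(x|\mathbb D_N)=L_{\tilde g}B(x)+((m_B)_2,\dots,(m_B)_{m+1})$. - $\Sigma_{L_gB}(x|\mathbb D_N)$ is the lower-right $m\times m$ block (rows and columns $2,\dots,m+1$) of $\Sigma_B(x|\mathbb D_N)$. The GP-CBF-SOCP at $x$ is: minimize $\|u-u_{\text{ref}}(x)\|_2^2$ over $u\in\mathbb R^m$ subject to $L_{\tilde f}B(x)+L_{\tilde g}B(x)u+\mu_B(x,u|\mathbb D_N)-\beta\sigma_B(x,u|\mathbb D_N)+\gamma(B(x))\ge0$. It is feasible at $x$ if some $u$ satisfies the constraint. *)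

theory Defs
  imports "HOL-Analysis.Analysis"
begin

text \<open>Index convention: the m+1 components of the affine dot product kernel are indexed
  by the type 'm option, where None is the drift component (index 1) and Some k the
  k-th control component (index k+1).\<close>

definition ext1 :: "real^'m::finite \<Rightarrow> real^('m option)" where
  "ext1 u = (\<chi> i. case i of None \<Rightarrow> 1 | Some k \<Rightarrow> u $ k)"

definition gram_Kc ::
  "('m::finite option \<Rightarrow> real^'d \<Rightarrow> real^'d \<Rightarrow> real) \<Rightarrow> ('n::finite \<Rightarrow> real^'d) \<Rightarrow> ('n \<Rightarrow> real^'m)
    \<Rightarrow> real^'n^'n" where
  "gram_Kc k xs us = (\<chi> j l. \<Sum>i\<in>UNIV. (ext1 (us j)) $ i * k i (xs j) (xs l) * (ext1 (us l)) $ i)"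

definition K_starY ::
  "('m::finite option \<Rightarrow> real^'d \<Rightarrow> real^'d \<Rightarrow> real) \<Rightarrow> ('n::finite \<Rightarrow> real^'d) \<Rightarrow> ('n \<Rightarrow> real^'m)
    \<Rightarrow> real^'d \<Rightarrow> real^'n^('m::finite option)" where
  "K_starY k xs us x = (\<chi> i j. k i x (xs j) * (ext1 (us j)) $ i)"

definition K_starstar ::
  "('m::finite option \<Rightarrow> real^'d \<Rightarrow> real^'d \<Rightarrow> real) \<Rightarrow> real^'d \<Rightarrow> real^('m::finite option)^('m::finite option)" where
  "K_starstar k x = (\<chi> i i'. if i = i' then k i x x else 0)"

definition reg_inv ::
  "('m::finite option \<Rightarrow> real^'d \<Rightarrow> real^'d \<Rightarrow> real) \<Rightarrow> ('n::finite \<Rightarrow> real^'d) \<Rightarrow> ('n \<Rightarrow> real^'m)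
    \<Rightarrow> real \<Rightarrow> real^'n^'n" where
  "reg_inv k xs us sn = matrix_inv (gram_Kc k xs us + (sn\<^sup>2) *\<^sub>R mat 1)"

definition m_B ::
  "('m::finite option \<Rightarrow> real^'d \<Rightarrow> real^'d \<Rightarrow> real) \<Rightarrow> ('n::finite \<Rightarrow> real^'d) \<Rightarrow> ('n \<Rightarrow> real^'m)
    \<Rightarrow> real^'n \<Rightarrow> real \<Rightarrow> real^'d \<Rightarrow> real^('m::finite option)" where
  "m_B k xs us zs sn x = K_starY k xs us x *v (reg_inv k xs us sn *v zs)"

definition Sigma_B ::
  "('m::finite option \<Rightarrow> real^'d \<Rightarrow> real^'d \<Rightarrow> real) \<Rightarrow> ('n::finite \<Rightarrow> real^'d) \<Rightarrow> ('n \<Rightarrow> real^'m)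
    \<Rightarrow> real \<Rightarrow> real^'d \<Rightarrow> real^('m::finite option)^('m::finite option)" where
  "Sigma_B k xs us sn x =
     K_starstar k x - K_starY k xs us x ** reg_inv k xs us sn ** transpose (K_starY k xs us x)"

definition mu_B where
  "mu_B k xs us zs sn x u = m_B k xs us zs sn x \<bullet> ext1 u"

definition sigma_B where
  "sigma_B k xs us sn x u = sqrt (ext1 u \<bullet> (Sigma_B k xs us sn x *v ext1 u))"

definition Sigma_LgB where
  "Sigma_LgB k xs us sn x = (\<chi> a b. Sigma_B k xs us sn x $ Some a $ Some b)"

definition Lie_f :: "(real^'d \<Rightarrow> real^'d) \<Rightarrow> (real^'d \<Rightarrow> real^'d) \<Rightarrow> real^'d \<Rightarrow> real" where
  "Lie_f gradB ft x = gradB x \<bullet> ft x"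

definition Lie_g :: "(real^'d \<Rightarrow> real^'d) \<Rightarrow> (real^'d \<Rightarrow> real^'m^'d) \<Rightarrow> real^'d \<Rightarrow> real^'m" where
  "Lie_g gradB gt x = (\<chi> a. gradB x \<bullet> column a (gt x))"

text \<open>Estimates hat(L_gB) (row vector stored as a vector).\<close>
definition LgB_hat where
  "LgB_hat gradB gt k xs us zs sn x = Lie_g gradB gt x + (\<chi> a. m_B k xs us zs sn x $ Some a)"

definition tradeoff_F where
  "tradeoff_F beta gradB gt k xs us zs sn x =
     (beta\<^sup>2) *\<^sub>R Sigma_LgB k xs us sn x
     - (\<chi> a b. LgB_hat gradB gt k xs us zs sn x $ a * LgB_hat gradB gt k xs us zs sn x $ b)"

definition is_min_eigenvalue :: "real^'m^'m \<Rightarrow> real \<Rightarrow> bool" where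
  "is_min_eigenvalue M lam \<longleftrightarrow>
     (\<exists>v. v \<noteq> 0 \<and> M *v v = lam *\<^sub>R v) \<and> (\<forall>mu v. v \<noteq> 0 \<and> M *v v = mu *\<^sub>R v \<longrightarrow> lam \<le> mu)"

definition is_unit_eigenvector :: "real^'m^'m \<Rightarrow> real \<Rightarrow> real^'m \<Rightarrow> bool" where
  "is_unit_eigenvector M lam e \<longleftrightarrow> norm e = 1 \<and> M *v e = lam *\<^sub>R e"

definition socp_constraint where
  "socp_constraint beta gamma B gradB ft gt k xs us zs sn x u \<longleftrightarrow>
     Lie_f gradB ft x + Lie_g gradB gt x \<bullet> u + mu_B k xs us zs sn x u
       - beta * sigma_B k xs us sn x u + gamma (B x) \<ge> 0"

definition socp_feasible where
  "socp_feasible beta gamma B gradB ft gt k xs us zs sn x \<longleftrightarrow>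
     (\<exists>u. socp_constraint beta gamma B gradB ft gt k xs us zs sn x u)"

definition ext_class_K_inf :: "(real \<Rightarrow> real) \<Rightarrow> bool" where
  "ext_class_K_inf gamma \<longleftrightarrow> continuous_on UNIV gamma \<and> strict_mono gamma \<and> gamma 0 = 0
     \<and> filterlim gamma at_top at_top \<and> filterlim gamma at_bot at_bot"

end

theory Submission imports Defs begin

lemma sum_option_split: "(\<Sum>i\<in>(UNIV::'m::finite option set). f i) = f None + (\<Sum>a\<in>UNIV. f (Some a))"
  by (simp add: UNIV_option_conv sum.reindex)

lemma inner_option_split:
  fixes v w :: "real^('m::finite option)"
  shows "v \<bullet> w = v$None * w$None + (\<chi> a. v$Some a) \<bullet> (\<chi> a. w$Some a)"
  by (simp add: inner_vec_def sum_option_split)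

definition w1 :: "real^'m::finite \<Rightarrow> real^('m option)" where
  "w1 e = (\<chi> i. case i of None \<Rightarrow> 0 | Some a \<Rightarrow> e $ a)"

lemma ext1_split: "ext1 (c *\<^sub>R e) = ext1 0 + c *\<^sub>R w1 e"
  by (simp add: vec_eq_iff ext1_def w1_def split: option.split)

lemma w1_nz: "e \<noteq> 0 \<Longrightarrow> w1 e \<noteq> 0"
  by (auto simp: vec_eq_iff w1_def split: option.split)

lemma inner_w1: "(v::real^('m::finite option)) \<bullet> w1 e = (\<chi> a. v$Some a) \<bullet> e"
  by (simp add: inner_option_split w1_def)

lemma inner_ext0: "(v::real^('m::finite option)) \<bullet> ext1 0 = v$None"
  by (simp add: inner_option_split ext1_def zero_vec_def[symmetric])

lemma w1_quad: "w1 e \<bullet> (S *v w1 e) = e \<bullet> ((\<chi> a b. S $ Some a $ Some b) *v e)"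
proof -
  have "(\<chi> a. (S *v w1 e) $ Some a) = (\<chi> a b. S $ Some a $ Some b) *v e"
    by (simp add: vec_eq_iff matrix_vector_mult_def sum_option_split w1_def)
  moreover have "w1 e \<bullet> (S *v w1 e) = (\<chi> a. (S *v w1 e) $ Some a) \<bullet> e"
    by (subst inner_commute) (rule inner_w1)
  ultimately show ?thesis by (simp add: inner_commute)
qed

lemma outer_mv: "(\<chi> a b. (L::real^'m::finite) $ a * L $ b) *v e = (L \<bullet> e) *\<^sub>R L"
  by (simp add: vec_eq_iff matrix_vector_mult_def inner_vec_def sum_distrib_left mult.assoc mult.commute mult.left_commute)

lemma matrix_vector_mult_scaleR': "A *v (c *\<^sub>R v) = c *\<^sub>R (A *v (v::real^'a::finite))"
  for A :: "real^'a^'b::finite"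
  by (simp add: matrix_vector_mult_scaleR)

lemma quad_expand:
  fixes S :: "real^('m::finite option)^('m option)"
  shows "ext1 (c *\<^sub>R e) \<bullet> (S *v ext1 (c *\<^sub>R e)) =
    ext1 0 \<bullet> (S *v ext1 0) + c * (ext1 0 \<bullet> (S *v w1 e) + w1 e \<bullet> (S *v ext1 0))
    + c^2 * (w1 e \<bullet> (S *v w1 e))"
  by (simp add: ext1_split matrix_vector_right_distrib matrix_vector_mult_scaleR'
      inner_add_left inner_add_right algebra_simps power2_eq_square)

theorem lemma4:
  fixes X :: "(real^'d) set" and x :: "real^'d"
    and B :: "real^'d \<Rightarrow> real" and gradB :: "real^'d \<Rightarrow> real^'d"
    and ft :: "real^'d \<Rightarrow> real^'d" and gt :: "real^'d \<Rightarrow> real^'m^'d"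
    and gamma :: "real \<Rightarrow> real" and beta :: real
    and k :: "'m option \<Rightarrow> real^'d \<Rightarrow> real^'d \<Rightarrow> real"
    and xs :: "'n::finite \<Rightarrow> real^'d" and us :: "'n \<Rightarrow> real^'m" and zs :: "real^'n"
    and sn :: real and lam :: real and e :: "real^'m"
  assumes B_C1: "\<forall>y\<in>X. (B has_derivative (\<lambda>h. gradB y \<bullet> h)) (at y within X)"
    and gradB_cont: "continuous_on X gradB"
    and gamma: "ext_class_K_inf gamma"
    and beta: "beta > 0"
    and sn: "sn > 0"
    and x: "x \<in> X"
    and SigmaB_pd: "\<forall>v. v \<noteq> 0 \<longrightarrow> v \<bullet> (Sigma_B k xs us sn x *v v) > 0"
    and lam: "is_min_eigenvalue (tradeoff_F beta gradB gt k xs us zs sn x) lam"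
    and e: "is_unit_eigenvector (tradeoff_F beta gradB gt k xs us zs sn x) lam e"
    and neg: "lam < 0"
  shows "socp_feasible beta gamma B gradB ft gt k xs us zs sn x
    \<and> (\<exists>alpha_min > 0. \<forall>alpha > alpha_min.
          socp_constraint beta gamma B gradB ft gt k xs us zs sn x
            ((alpha * sgn (LgB_hat gradB gt k xs us zs sn x \<bullet> e)) *\<^sub>R e))"
proof -
  define S where "S = Sigma_B k xs us sn x"
  define L where "L = LgB_hat gradB gt k xs us zs sn x"
  define m where "m = m_B k xs us zs sn x"
  define p where "p = w1 e \<bullet> (S *v w1 e)"
  define d where "d = \<bar>L \<bullet> e\<bar>"
  define a0 where "a0 = Lie_f gradB ft x + m $ None + gamma (B x)"
  define A where "A = ext1 0 \<bullet> (S *v ext1 0)"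
  define b2 where "b2 = ext1 0 \<bullet> (S *v w1 e) + w1 e \<bullet> (S *v ext1 0)"
  have en: "e \<noteq> 0" using e by (auto simp: is_unit_eigenvector_def)
  have ee: "e \<bullet> e = 1" using e by (simp add: is_unit_eigenvector_def norm_eq_1)
  have p0: "p > 0" unfolding p_def S_def using SigmaB_pd w1_nz[OF en] by blast
  have Fe: "e \<bullet> (tradeoff_F beta gradB gt k xs us zs sn x *v e) = lam"
    using e ee by (simp add: is_unit_eigenvector_def)
  have "e \<bullet> (tradeoff_F beta gradB gt k xs us zs sn x *v e) = beta^2 * p - (L \<bullet> e)^2"
    unfolding tradeoff_F_def
    by (simp add: matrix_vector_mult_diff_rdistrib scaleR_matrix_vector_assoc[symmetric]
        outer_mv p_def w1_quad S_def Sigma_LgB_def L_def power2_eq_square inner_commute inner_diff_right)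
  with Fe neg have gap: "beta^2 * p < d^2" by (simp add: d_def)
  define g where "g = d^2 - beta^2 * p"
  have g0: "g > 0" using gap by (simp add: g_def)
  have "beta^2 * p > 0" using p0 beta by simp
  hence "d^2 > 0" using gap by linarith
  hence d0: "d > 0" unfolding d_def by simp
  define C0 where "C0 = 2 * a0 * d - beta^2 * \<bar>b2\<bar>"
  define D0 where "D0 = a0^2 - beta^2 * \<bar>A\<bar>"
  define amin where "amin = 1 + \<bar>a0\<bar> / d + (\<bar>C0\<bar> + \<bar>D0\<bar>) / g"
  have key: "socp_constraint beta gamma B gradB ft gt k xs us zs sn x
            ((alpha * sgn (L \<bullet> e)) *\<^sub>R e)" if al: "alpha > amin" for alpha
  proof -
    define c where "c = alpha * sgn (L \<bullet> e)"
    have cL: "c * (L \<bullet> e) = alpha * d" by (simp add: c_def d_def abs_sgn mult.assoc)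
    have c2: "c^2 = alpha^2" using d0 by (simp add: c_def d_def power_mult_distrib sgn_if)
    have X0: "\<bar>a0\<bar> / d \<ge> 0" using d0 by simp
    have Y0: "(\<bar>C0\<bar> + \<bar>D0\<bar>) / g \<ge> 0" using g0 by simp
    have a1: "alpha > 1" "alpha > \<bar>a0\<bar> / d" "alpha > (\<bar>C0\<bar> + \<bar>D0\<bar>) / g"
      using al X0 Y0 unfolding amin_def by linarith+
    have sb: "sgn (L \<bullet> e) * b2 \<le> \<bar>b2\<bar>" by (auto simp: sgn_if)
    have "alpha * (sgn (L \<bullet> e) * b2) \<le> alpha * \<bar>b2\<bar>"
      using mult_left_mono[OF sb, of alpha] a1(1) by simp
    hence cb: "c * b2 \<le> alpha * \<bar>b2\<bar>" unfolding c_def by (simp add: mult.assoc)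
    have q: "ext1 (c *\<^sub>R e) \<bullet> (S *v ext1 (c *\<^sub>R e)) = A + c * b2 + c^2 * p"
      by (simp add: quad_expand A_def b2_def p_def)
    have mu: "Lie_g gradB gt x \<bullet> (c *\<^sub>R e) + mu_B k xs us zs sn x (c *\<^sub>R e) = m $ None + c * (L \<bullet> e)"
      unfolding mu_B_def ext1_split L_def LgB_hat_def m_def
      by (simp add: inner_add_right inner_ext0 inner_w1 inner_add_left algebra_simps)
    have qle: "ext1 (c *\<^sub>R e) \<bullet> (S *v ext1 (c *\<^sub>R e)) \<le> \<bar>A\<bar> + alpha * \<bar>b2\<bar> + alpha^2 * p"
      using q cb c2 by simp
    have pos: "a0 + alpha * d \<ge> 0"
      using a1(2) d0 by (simp add: pos_divide_less_eq mult.commute)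
    have ag: "alpha * g \<ge> \<bar>C0\<bar> + \<bar>D0\<bar>" using a1(3) g0 by (simp add: pos_divide_less_eq mult.commute)
    have "alpha * (alpha * g) \<ge> alpha * (\<bar>C0\<bar> + \<bar>D0\<bar>)" using ag a1(1) by (simp add: mult_left_mono)
    hence h0: "alpha^2 * g \<ge> alpha * \<bar>C0\<bar> + alpha * \<bar>D0\<bar>"
      by (simp add: power2_eq_square mult.assoc distrib_left)
    have h2: "alpha * \<bar>D0\<bar> \<ge> \<bar>D0\<bar>" using mult_right_mono[of 1 alpha "\<bar>D0\<bar>"] a1(1) by simp
    have "alpha * (- \<bar>C0\<bar>) \<le> alpha * C0" using a1(1) by (intro mult_left_mono) auto
    hence h3: "alpha * C0 \<ge> - (alpha * \<bar>C0\<bar>)" by simp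
    have h4: "D0 \<ge> - \<bar>D0\<bar>" by simp
    have poly: "alpha^2 * g + alpha * C0 + D0 \<ge> 0" using h0 h2 h3 h4 by linarith
    have "(a0 + alpha * d)^2 - beta^2 * (\<bar>A\<bar> + alpha * \<bar>b2\<bar> + alpha^2 * p) = alpha^2 * g + alpha * C0 + D0"
      by (simp add: g_def C0_def D0_def algebra_simps power2_eq_square)
    moreover have "beta^2 * (ext1 (c *\<^sub>R e) \<bullet> (S *v ext1 (c *\<^sub>R e))) \<le> beta^2 * (\<bar>A\<bar> + alpha * \<bar>b2\<bar> + alpha^2 * p)"
      using qle by (intro mult_left_mono) auto
    ultimately have b1: "beta^2 * (ext1 (c *\<^sub>R e) \<bullet> (S *v ext1 (c *\<^sub>R e))) \<le> (a0 + alpha * d)^2"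
      using poly by linarith
    have "beta * sigma_B k xs us sn x (c *\<^sub>R e) = sqrt (beta^2 * (ext1 (c *\<^sub>R e) \<bullet> (S *v ext1 (c *\<^sub>R e))))"
      using beta by (simp add: sigma_B_def S_def real_sqrt_mult)
    also have "\<dots> \<le> sqrt ((a0 + alpha * d)^2)" using b1 real_sqrt_le_mono by blast
    also have "\<dots> = a0 + alpha * d" using pos by simp
    finally have "beta * sigma_B k xs us sn x (c *\<^sub>R e) \<le> a0 + alpha * d" .
    then show ?thesis using mu cL unfolding socp_constraint_def c_def[symmetric] a0_def
      by linarith
  qed
  have "\<bar>a0\<bar> / d \<ge> 0" using d0 by simp
  moreover have "(\<bar>C0\<bar> + \<bar>D0\<bar>) / g \<ge> 0" using g0 by simp
  ultimately have amin0: "amin > 0" unfolding amin_def by linarith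
  show ?thesis unfolding socp_feasible_def L_def[symmetric]
    using key amin0 by (meson lt_ex less_add_one)
  qed

end
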